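(* Let $\mathbb{P}$ be a nonlocal (non-signalling) box, and for $x,y\in\{0,1\}$ let $\eta_{x,y}:=2\,\mathbb{P}(a\oplus b=xy\mid x,y)-1=2\sum_{c\in\{0,1\}}\mathbb{P}(c,c\oplus xy\mid x,y)-1\in[-1,1]$. Define $$A:=(\eta_{0,0}+\eta_{0,1}+\eta_{1,0}+\eta_{1,1})^2,\qquad B:=2\eta_{0,0}^2+4\eta_{0,1}\eta_{1,0}+2\eta_{1,1}^2.$$ If $A+B>16$, then $\mathbb{P}$ collapses communication complexity: there exists a constant $p>1/2$ (depending only on $\mathbb{P}$) such that for all $n,m\ge 1$ and every Boolean function $f:\{0,1\}^n\times\{0,1\}^m\to\{0,1\}$, we have $\mathtt{CC}^p(f)\le 1$ when Alice and Bob are allowed arbitrarily many shared random bits and arbitrarily many copies of $\mathbb{P}$.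
   Context: A nonlocal box (NLB) is a conditional probability distribution $\mathbb{P}(a,b\mid x,y)$ on outputs $a,b\in\{0,1\}$ given inputs $x,y\in\{0,1\}$ satisfying the non-signalling conditions $\sum_{\tilde b}\mathbb{P}(a,\tilde b\mid x,0)=\sum_{\tilde b}\mathbb{P}(a,\tilde b\mid x,1)$ and $\sum_{\tilde a}\mathbb{P}(\tilde a,b\mid 0,y)=\sum_{\tilde a}\mathbb{P}(\tilde a,b\mid 1,y)$ for all $a,b,x,y$. Alice has access to the input $x$/output $a$ side and Bob to the input $y$/output $b$ side; each copy of the box can be used once, each party receiving their output immediately after inputting, regardless of the other's action. Here $\oplus$ denotes addition mod 2. Communication complexity game: given a known $f:\{0,1\}^n\times\{0,1\}^m\to\{0,1\}$, Alice receives $X\in\{0,1\}^n$ and Bob receives $Y\in\{0,1\}^m$; they are spacelike separated, may use shared randomness and copies of the box, and Bob may send communication bits to Alice; Alice must output a bit $a'$ with the goal $a'=f(X,Y)$. For $p\in[0,1]$, $\mathtt{CC}^p(f)$ is the minimal number of communication bits required so that Alice's answer is correct with probability at least $p$ for every pair $(X,Y)$. Communication complexity collapses (with respect to the allowed resources) if there exists $p>1/2$ such that $\mathtt{CC}^p(f)\le 1$ for all Boolean functions $f$. *)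

theory Defs
  imports Complex_Main
begin

text \<open>A box is P a b x y = probability of outputs (a,b) given inputs (x,y).
  Bits are represented by bool; xor is (\<noteq>) and product is (\<and>).\<close>

type_synonym box = "bool \<Rightarrow> bool \<Rightarrow> bool \<Rightarrow> bool \<Rightarrow> real"

definition nonlocal_box :: "box \<Rightarrow> bool" where
  "nonlocal_box P \<longleftrightarrow>
     (\<forall>a b x y. P a b x y \<ge> 0) \<and>
     (\<forall>x y. (\<Sum>a\<in>UNIV. \<Sum>b\<in>UNIV. P a b x y) = 1) \<and>
     (\<forall>a x. (\<Sum>b\<in>UNIV. P a b x False) = (\<Sum>b\<in>UNIV. P a b x True)) \<and>
     (\<forall>b y. (\<Sum>a\<in>UNIV. P a b False y) = (\<Sum>a\<in>UNIV. P a b True y))"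

definition eta :: "box \<Rightarrow> bool \<Rightarrow> bool \<Rightarrow> real" where
  "eta P x y = 2 * (\<Sum>c\<in>UNIV. P c (c \<noteq> (x \<and> y)) x y) - 1"

text \<open>Joint probability that Alice's N box outputs are as and Bob's are bs, when the
  boxes are used one after the other (copy k at step k) and the input to copy k
  depends adaptively on the party's previous outputs.\<close>

definition box_joint ::
  "box \<Rightarrow> (nat \<Rightarrow> bool list \<Rightarrow> bool) \<Rightarrow> (nat \<Rightarrow> bool list \<Rightarrow> bool) \<Rightarrow> nat
     \<Rightarrow> bool list \<Rightarrow> bool list \<Rightarrow> real" where
  "box_joint P xin yin N as bs =
     (\<Prod>k<N. P (as ! k) (bs ! k) (xin k (take k as)) (yin k (take k bs)))"

text \<open>Success probability of a protocol using R uniformly random shared bits r and N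
  boxes. ain X r k prev : Alice's input to box k; bin Y r k prev : Bob's input to box k;
  msg Y r bs : Bob's message (bit string); out X r as c : Alice's answer.\<close>

definition success_prob ::
  "box \<Rightarrow> nat \<Rightarrow> nat
   \<Rightarrow> (bool list \<Rightarrow> bool list \<Rightarrow> nat \<Rightarrow> bool list \<Rightarrow> bool)
   \<Rightarrow> (bool list \<Rightarrow> bool list \<Rightarrow> nat \<Rightarrow> bool list \<Rightarrow> bool)
   \<Rightarrow> (bool list \<Rightarrow> bool list \<Rightarrow> bool list \<Rightarrow> bool list)
   \<Rightarrow> (bool list \<Rightarrow> bool list \<Rightarrow> bool list \<Rightarrow> bool list \<Rightarrow> bool)
   \<Rightarrow> (bool list \<Rightarrow> bool list \<Rightarrow> bool) \<Rightarrow> bool list \<Rightarrow> bool list \<Rightarrow> real" where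
  "success_prob P R N ain bin msg out f X Y =
     (\<Sum>r\<in>{r. length r = R}. \<Sum>as\<in>{l. length l = N}. \<Sum>bs\<in>{l. length l = N}.
        box_joint P (ain X r) (bin Y r) N as bs *
        (if out X r as (msg Y r bs) = f X Y then 1 else 0)) / 2 ^ R"

text \<open>There is a protocol with k communication bits (Bob to Alice), shared randomness
  and copies of P, computing f on {0,1}^n x {0,1}^m correctly with probability \<ge> p
  for every input pair.\<close>

definition cc_protocol :: "box \<Rightarrow> real \<Rightarrow> (bool list \<Rightarrow> bool list \<Rightarrow> bool) \<Rightarrow> nat \<Rightarrow> nat \<Rightarrow> nat \<Rightarrow> bool" where
  "cc_protocol P p f n m k \<longleftrightarrow>
     (\<exists>R N ain bin msg out.
        (\<forall>Y r bs. length (msg Y r bs) = k) \<and>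
        (\<forall>X Y. length X = n \<longrightarrow> length Y = m \<longrightarrow> success_prob P R N ain bin msg out f X Y \<ge> p))"

definition CC_le_1 :: "box \<Rightarrow> real \<Rightarrow> (bool list \<Rightarrow> bool list \<Rightarrow> bool) \<Rightarrow> nat \<Rightarrow> nat \<Rightarrow> bool" where
  "CC_le_1 P p f n m \<longleftrightarrow> (\<exists>k\<le>1. cc_protocol P p f n m k)"

end

theory Submission
  imports Defs
begin


datatype ('x,'y,'u,'v) prot = Prot (pR: nat) (pN: nat)
  (pA: "'x \<Rightarrow> bool list \<Rightarrow> nat \<Rightarrow> bool list \<Rightarrow> bool")
  (pB: "'y \<Rightarrow> bool list \<Rightarrow> nat \<Rightarrow> bool list \<Rightarrow> bool")
  (pfa: "'x \<Rightarrow> bool list \<Rightarrow> bool list \<Rightarrow> 'u")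
  (pfb: "'y \<Rightarrow> bool list \<Rightarrow> bool list \<Rightarrow> 'v")

definition EV :: "box \<Rightarrow> ('x,'y,'u,'v) prot \<Rightarrow> 'x \<Rightarrow> 'y \<Rightarrow> ('u \<Rightarrow> 'v \<Rightarrow> real) \<Rightarrow> real" where
  "EV P p X Y \<phi> = (\<Sum>r\<in>{r. length r = pR p}. \<Sum>as\<in>{l. length l = pN p}. \<Sum>bs\<in>{l. length l = pN p}.
      box_joint P (pA p X r) (pB p Y r) (pN p) as bs * \<phi> (pfa p X r as) (pfb p Y r bs)) / 2 ^ pR p"

lemma fin_len: "finite {l::bool list. length l = n}"
  using finite_lists_length_eq[of "UNIV::bool set" n] by simp

lemma sum_len_app:
  "(\<Sum>l\<in>{l::bool list. length l = n1 + n2}. F l) =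
   (\<Sum>l1\<in>{l. length l = n1}. \<Sum>l2\<in>{l. length l = n2}. F (l1 @ l2))"
proof -
  have eq: "{l::bool list. length l = n1 + n2} = (\<lambda>(l1,l2). l1 @ l2) ` ({l. length l = n1} \<times> {l. length l = n2})"
  proof (rule set_eqI, rule iffI)
    fix l :: "bool list" assume "l \<in> {l. length l = n1 + n2}"
    then have "l = take n1 l @ drop n1 l" "length (take n1 l) = n1" "length (drop n1 l) = n2" by auto
    then show "l \<in> (\<lambda>(l1,l2). l1 @ l2) ` ({l. length l = n1} \<times> {l. length l = n2})"
      by (metis (mono_tags, lifting) SigmaI case_prod_conv image_eqI mem_Collect_eq)
  qed auto
  have inj: "inj_on (\<lambda>(l1,l2). l1 @ l2) ({l::bool list. length l = n1} \<times> {l. length l = n2})"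
    by (auto simp: inj_on_def)
  show ?thesis unfolding eq
    by (subst sum.reindex[OF inj]) (simp add: sum.cartesian_product split_def)
qed

lemma sum_len_0: "(\<Sum>l\<in>{l::bool list. length l = 0}. F l) = F []"
proof -
  have "{l::bool list. length l = 0} = {[]}" by auto
  then show ?thesis by simp
qed

lemma sum_len_Suc: "(\<Sum>l\<in>{l::bool list. length l = Suc n}. F l) =
   (\<Sum>b\<in>UNIV. \<Sum>l\<in>{l. length l = n}. F (b # l))"
proof -
  have eq: "{l::bool list. length l = Suc n} = (\<lambda>(b,l). b # l) ` (UNIV \<times> {l. length l = n})"
  proof (rule set_eqI, rule iffI)
    fix l :: "bool list" assume "l \<in> {l. length l = Suc n}"
    then obtain b t where "l = b # t" "length t = n" by (cases l) auto
    then show "l \<in> (\<lambda>(b,l). b # l) ` (UNIV \<times> {l. length l = n})" by auto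
  qed auto
  have inj: "inj_on (\<lambda>(b,l). b # l) (UNIV \<times> {l::bool list. length l = n})"
    by (auto simp: inj_on_def)
  show ?thesis unfolding eq
    by (subst sum.reindex[OF inj]) (simp add: sum.cartesian_product split_def)
qed

lemma bj_cong: "(\<And>k. k < n \<Longrightarrow> xin k = xin' k) \<Longrightarrow> (\<And>k. k < n \<Longrightarrow> yin k = yin' k) \<Longrightarrow>
  box_joint P xin yin n as bs = box_joint P xin' yin' n as bs"
  unfolding box_joint_def by (rule prod.cong) auto

lemma bj_split:
  assumes "length as1 = n1" "length bs1 = n1"
  shows "box_joint P xin yin (n1 + n2) (as1 @ as2) (bs1 @ bs2) =
    box_joint P xin yin n1 as1 bs1 *
    box_joint P (\<lambda>k p. xin (n1 + k) (as1 @ p)) (\<lambda>k p. yin (n1 + k) (bs1 @ p)) n2 as2 bs2"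
proof -
  have u: "{..<n1 + n2} = {..<n1} \<union> {n1..<n1+n2}" by auto
  have "box_joint P xin yin (n1 + n2) (as1 @ as2) (bs1 @ bs2) =
     (\<Prod>k<n1. P ((as1 @ as2) ! k) ((bs1 @ bs2) ! k) (xin k (take k (as1 @ as2))) (yin k (take k (bs1 @ bs2)))) *
     (\<Prod>k\<in>{n1..<n1+n2}. P ((as1 @ as2) ! k) ((bs1 @ bs2) ! k) (xin k (take k (as1 @ as2))) (yin k (take k (bs1 @ bs2))))"
    unfolding box_joint_def u by (rule prod.union_disjoint) auto
  also have "(\<Prod>k<n1. P ((as1 @ as2) ! k) ((bs1 @ bs2) ! k) (xin k (take k (as1 @ as2))) (yin k (take k (bs1 @ bs2))))
     = box_joint P xin yin n1 as1 bs1"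
    unfolding box_joint_def using assms by (intro prod.cong) (auto simp: nth_append)
  also have "(\<Prod>k\<in>{n1..<n1+n2}. P ((as1 @ as2) ! k) ((bs1 @ bs2) ! k) (xin k (take k (as1 @ as2))) (yin k (take k (bs1 @ bs2))))
     = (\<Prod>j<n2. P ((as1 @ as2) ! (n1+j)) ((bs1 @ bs2) ! (n1+j)) (xin (n1+j) (take (n1+j) (as1 @ as2))) (yin (n1+j) (take (n1+j) (bs1 @ bs2))))"
    by (rule prod.reindex_bij_witness[of _ "\<lambda>j. n1 + j" "\<lambda>k. k - n1"]) auto
  also have "\<dots> = box_joint P (\<lambda>k p. xin (n1 + k) (as1 @ p)) (\<lambda>k p. yin (n1 + k) (bs1 @ p)) n2 as2 bs2"
    unfolding box_joint_def using assms by (intro prod.cong) (auto simp: nth_append)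
  finally show ?thesis .
qed


definition pbind :: "('x,'y,'u,'v) prot \<Rightarrow> ('x \<times> 'u, 'y \<times> 'v, 'u2, 'v2) prot \<Rightarrow> ('x,'y,'u2,'v2) prot" where
"pbind p1 p2 = Prot (pR p1 + pR p2) (pN p1 + pN p2)
  (\<lambda>X r k prev. if k < pN p1 then pA p1 X (take (pR p1) r) k prev
       else pA p2 (X, pfa p1 X (take (pR p1) r) (take (pN p1) prev)) (drop (pR p1) r) (k - pN p1) (drop (pN p1) prev))
  (\<lambda>Y r k prev. if k < pN p1 then pB p1 Y (take (pR p1) r) k prev
       else pB p2 (Y, pfb p1 Y (take (pR p1) r) (take (pN p1) prev)) (drop (pR p1) r) (k - pN p1) (drop (pN p1) prev))
  (\<lambda>X r as. pfa p2 (X, pfa p1 X (take (pR p1) r) (take (pN p1) as)) (drop (pR p1) r) (drop (pN p1) as))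
  (\<lambda>Y r bs. pfb p2 (Y, pfb p1 Y (take (pR p1) r) (take (pN p1) bs)) (drop (pR p1) r) (drop (pN p1) bs))"

lemma EV_bind: "EV P (pbind p1 p2) X Y \<phi> = EV P p1 X Y (\<lambda>u v. EV P p2 (X,u) (Y,v) \<phi>)"
proof -
  define R1 where "R1 = pR p1"
  define R2 where "R2 = pR p2"
  define N1 where "N1 = pN p1"
  define N2 where "N2 = pN p2"
  define L where "L = (\<lambda>n. {l::bool list. length l = n})"
  define J1 where "J1 = (\<lambda>r1 as1 bs1. box_joint P (pA p1 X r1) (pB p1 Y r1) N1 as1 bs1)"
  define F where "F = (\<lambda>r1 as1 bs1 r2 as2 bs2. box_joint P (pA p2 (X, pfa p1 X r1 as1) r2) (pB p2 (Y, pfb p1 Y r1 bs1) r2) N2 as2 bs2 *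
        \<phi> (pfa p2 (X, pfa p1 X r1 as1) r2 as2) (pfb p2 (Y, pfb p1 Y r1 bs1) r2 bs2))"
  let ?q = "pbind p1 p2"
  have pt: "box_joint P (pA ?q X (r1@r2)) (pB ?q Y (r1@r2)) (N1+N2) (as1@as2) (bs1@bs2) *
       \<phi> (pfa ?q X (r1@r2) (as1@as2)) (pfb ?q Y (r1@r2) (bs1@bs2)) = J1 r1 as1 bs1 * F r1 as1 bs1 r2 as2 bs2"
    if "r1 \<in> L R1" "as1 \<in> L N1" "bs1 \<in> L N1" for r1 r2 as1 as2 bs1 bs2
  proof -
    have l: "length r1 = R1" "length as1 = N1" "length bs1 = N1" using that by (auto simp: L_def)
    have "box_joint P (pA ?q X (r1@r2)) (pB ?q Y (r1@r2)) (N1+N2) (as1@as2) (bs1@bs2) =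
      box_joint P (pA ?q X (r1@r2)) (pB ?q Y (r1@r2)) N1 as1 bs1 *
      box_joint P (\<lambda>k p. pA ?q X (r1@r2) (N1 + k) (as1 @ p)) (\<lambda>k p. pB ?q Y (r1@r2) (N1 + k) (bs1 @ p)) N2 as2 bs2"
      using l by (rule_tac bj_split) auto
    also have "box_joint P (pA ?q X (r1@r2)) (pB ?q Y (r1@r2)) N1 as1 bs1 = J1 r1 as1 bs1"
      unfolding J1_def using l by (intro bj_cong) (auto simp: pbind_def N1_def R1_def)
    also have "box_joint P (\<lambda>k p. pA ?q X (r1@r2) (N1 + k) (as1 @ p)) (\<lambda>k p. pB ?q Y (r1@r2) (N1 + k) (bs1 @ p)) N2 as2 bs2
       = box_joint P (pA p2 (X, pfa p1 X r1 as1) r2) (pB p2 (Y, pfb p1 Y r1 bs1) r2) N2 as2 bs2"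
      using l by (intro bj_cong) (auto simp: pbind_def N1_def R1_def)
    finally show ?thesis using l by (simp add: F_def pbind_def N1_def R1_def)
  qed
  have "EV P ?q X Y \<phi> = (\<Sum>r1\<in>L R1. \<Sum>r2\<in>L R2. \<Sum>as1\<in>L N1. \<Sum>as2\<in>L N2. \<Sum>bs1\<in>L N1. \<Sum>bs2\<in>L N2.
      box_joint P (pA ?q X (r1@r2)) (pB ?q Y (r1@r2)) (N1+N2) (as1@as2) (bs1@bs2) *
       \<phi> (pfa ?q X (r1@r2) (as1@as2)) (pfb ?q Y (r1@r2) (bs1@bs2))) / 2 ^ (R1 + R2)"
    unfolding EV_def by (simp add: pbind_def sum_len_app L_def R1_def R2_def N1_def N2_def)
  also have "\<dots> = (\<Sum>r1\<in>L R1. \<Sum>r2\<in>L R2. \<Sum>as1\<in>L N1. \<Sum>as2\<in>L N2. \<Sum>bs1\<in>L N1. \<Sum>bs2\<in>L N2.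
      J1 r1 as1 bs1 * F r1 as1 bs1 r2 as2 bs2) / 2 ^ (R1 + R2)"
    by (intro arg_cong[where f="\<lambda>x. x / _"] sum.cong refl pt) auto
  also have "\<dots> = (\<Sum>r1\<in>L R1. \<Sum>as1\<in>L N1. \<Sum>bs1\<in>L N1. \<Sum>r2\<in>L R2. \<Sum>as2\<in>L N2. \<Sum>bs2\<in>L N2.
      J1 r1 as1 bs1 * F r1 as1 bs1 r2 as2 bs2) / 2 ^ (R1 + R2)"
  proof -
    have "(\<Sum>r2\<in>L R2. \<Sum>as1\<in>L N1. \<Sum>as2\<in>L N2. \<Sum>bs1\<in>L N1. \<Sum>bs2\<in>L N2. G r2 as1 as2 bs1 bs2) =
          (\<Sum>as1\<in>L N1. \<Sum>bs1\<in>L N1. \<Sum>r2\<in>L R2. \<Sum>as2\<in>L N2. \<Sum>bs2\<in>L N2. G r2 as1 as2 bs1 bs2)" for G :: "_ \<Rightarrow> _ \<Rightarrow> _ \<Rightarrow> _ \<Rightarrow> _ \<Rightarrow> real"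
    proof -
      have "(\<Sum>r2\<in>L R2. \<Sum>as1\<in>L N1. \<Sum>as2\<in>L N2. \<Sum>bs1\<in>L N1. \<Sum>bs2\<in>L N2. G r2 as1 as2 bs1 bs2) =
          (\<Sum>r2\<in>L R2. \<Sum>as1\<in>L N1. \<Sum>bs1\<in>L N1. \<Sum>as2\<in>L N2. \<Sum>bs2\<in>L N2. G r2 as1 as2 bs1 bs2)"
        by (rule sum.cong[OF refl], rule sum.cong[OF refl], rule sum.swap)
      also have "\<dots> = (\<Sum>as1\<in>L N1. \<Sum>r2\<in>L R2. \<Sum>bs1\<in>L N1. \<Sum>as2\<in>L N2. \<Sum>bs2\<in>L N2. G r2 as1 as2 bs1 bs2)"
        by (rule sum.swap)
      also have "\<dots> = (\<Sum>as1\<in>L N1. \<Sum>bs1\<in>L N1. \<Sum>r2\<in>L R2. \<Sum>as2\<in>L N2. \<Sum>bs2\<in>L N2. G r2 as1 as2 bs1 bs2)"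
        by (rule sum.cong[OF refl], rule sum.swap)
      finally show ?thesis .
    qed
    then show ?thesis by simp
  qed
  also have "\<dots> = (\<Sum>r1\<in>L R1. \<Sum>as1\<in>L N1. \<Sum>bs1\<in>L N1. J1 r1 as1 bs1 *
       ((\<Sum>r2\<in>L R2. \<Sum>as2\<in>L N2. \<Sum>bs2\<in>L N2. F r1 as1 bs1 r2 as2 bs2) / 2 ^ R2)) / 2 ^ R1"
    by (simp add: sum_distrib_left sum_divide_distrib power_add mult.commute divide_divide_eq_left)
  also have "\<dots> = EV P p1 X Y (\<lambda>u v. EV P p2 (X,u) (Y,v) \<phi>)"
    unfolding EV_def F_def J1_def L_def R1_def R2_def N1_def N2_def by simp
  finally show ?thesis .
qed


definition premap :: "('x2 \<Rightarrow> 'x) \<Rightarrow> ('y2 \<Rightarrow> 'y) \<Rightarrow> ('x,'y,'u,'v) prot \<Rightarrow> ('x2,'y2,'u,'v) prot" where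
  "premap fx fy p = Prot (pR p) (pN p) (\<lambda>X. pA p (fx X)) (\<lambda>Y. pB p (fy Y)) (\<lambda>X. pfa p (fx X)) (\<lambda>Y. pfb p (fy Y))"

definition pret :: "('x \<Rightarrow> 'u) \<Rightarrow> ('y \<Rightarrow> 'v) \<Rightarrow> ('x,'y,'u,'v) prot" where
  "pret ga gb = Prot 0 0 (\<lambda>_ _ _ _. False) (\<lambda>_ _ _ _. False) (\<lambda>X r as. ga X) (\<lambda>Y r bs. gb Y)"

definition prand :: "('x,'y,bool,bool) prot" where
  "prand = Prot 1 0 (\<lambda>_ _ _ _. False) (\<lambda>_ _ _ _. False) (\<lambda>X r as. r ! 0) (\<lambda>Y r bs. r ! 0)"

definition pbox :: "('x \<Rightarrow> bool) \<Rightarrow> ('y \<Rightarrow> bool) \<Rightarrow> ('x,'y,bool,bool) prot" where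
  "pbox ia ib = Prot 0 1 (\<lambda>X r k p. ia X) (\<lambda>Y r k p. ib Y) (\<lambda>X r as. as ! 0) (\<lambda>Y r bs. bs ! 0)"

lemma EV_premap[simp]: "EV P (premap fx fy p) X Y \<phi> = EV P p (fx X) (fy Y) \<phi>"
  unfolding EV_def premap_def by simp

lemma EV_ret[simp]: "EV P (pret ga gb) X Y \<phi> = \<phi> (ga X) (gb Y)"
  unfolding EV_def pret_def by (simp add: sum_len_0 box_joint_def)

lemma EV_rand[simp]: "EV P prand X Y \<phi> = (\<phi> True True + \<phi> False False) / 2"
  unfolding EV_def prand_def by (simp add: sum_len_0 sum_len_Suc[where n=0, simplified] box_joint_def UNIV_bool)

lemma EV_box[simp]: "EV P (pbox ia ib) X Y \<phi> = (\<Sum>a\<in>UNIV. \<Sum>b\<in>UNIV. P a b (ia X) (ib Y) * \<phi> a b)"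
  unfolding EV_def pbox_def by (simp add: sum_len_0 sum_len_Suc[where n=0, simplified] box_joint_def)

lemma EV_lin: "EV P p X Y (\<lambda>u v. c1 + c2 * \<phi> u v) = c1 * EV P p X Y (\<lambda>_ _. 1) + c2 * EV P p X Y \<phi>"
  unfolding EV_def
  by (simp add: algebra_simps sum.distrib sum_distrib_left add_divide_distrib)

lemma EV_cmult: "EV P p X Y (\<lambda>u v. c * \<phi> u v) = c * EV P p X Y \<phi>"
  using EV_lin[of P p X Y 0 c \<phi>] by simp

lemma EV_const: "EV P p X Y (\<lambda>u v. c) = c * EV P p X Y (\<lambda>_ _. 1)"
  using EV_lin[of P p X Y c 0] by simp

definition normp :: "box \<Rightarrow> ('x,'y,'u,'v) prot \<Rightarrow> bool" where
  "normp P p \<longleftrightarrow> (\<forall>X Y. EV P p X Y (\<lambda>_ _. 1) = 1)"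

lemma normp_bind: "normp P p1 \<Longrightarrow> normp P p2 \<Longrightarrow> normp P (pbind p1 p2)"
  unfolding normp_def by (simp add: EV_bind)

lemma normp_premap: "normp P p \<Longrightarrow> normp P (premap fx fy p)"
  unfolding normp_def by simp

lemma normp_ret: "normp P (pret ga gb)"
  unfolding normp_def by simp

lemma normp_rand: "normp P prand"
  unfolding normp_def by simp

lemma nlb_sum1: "nonlocal_box P \<Longrightarrow> (\<Sum>a\<in>UNIV. \<Sum>b\<in>UNIV. P a b x y) = 1"
  unfolding nonlocal_box_def by blast

lemma normp_box: "nonlocal_box P \<Longrightarrow> normp P (pbox ia ib)"
  unfolding normp_def by (simp add: nlb_sum1)

definition sg :: "bool \<Rightarrow> real" where "sg b = (if b then -1 else 1)"

lemma box_lemma: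
  assumes P: "nonlocal_box P" and F: "\<And>a b. F a b = k * sg ((a \<noteq> b) \<noteq> w)"
  shows "(\<Sum>a\<in>UNIV. \<Sum>b\<in>UNIV. P a b x y * F a b) = k * (sg (w \<noteq> (x \<and> y)) * eta P x y)"
proof -
  have s1: "P False False x y = 1 - P True True x y - P True False x y - P False True x y"
    using nlb_sum1[OF P, of x y] by (simp add: UNIV_bool)
  show ?thesis using s1 unfolding F eta_def sg_def
    by (cases x; cases y; cases w; simp add: UNIV_bool algebra_simps; simp add: distrib_left[symmetric])
qed


lemma sumB: "(\<Sum>b\<in>(UNIV::bool set). f b) = f True + f False"
  by (simp add: UNIV_bool add.commute)

definition etab :: "box \<Rightarrow> real" where
  "etab P = (eta P False False + eta P False True + eta P True False + eta P True True) / 4"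

definition mux :: "bool \<Rightarrow> (bool \<times> bool, bool \<times> bool \<times> bool, bool, bool) prot" where
  "mux fl = pbind prand (pbind (premap fst fst prand)
     (pbind (pbox (\<lambda>(((a0,a1),\<alpha>),\<beta>). (a0 \<noteq> a1) \<noteq> \<alpha>) (\<lambda>(((y,_),\<alpha>),\<beta>). y \<noteq> \<beta>))
       (pret (\<lambda>((((a0,a1),\<alpha>),\<beta>),c). (((a0 \<noteq> c) \<noteq> ((a0 \<noteq> a1) \<and> \<beta>)) \<noteq> (\<alpha> \<and> \<beta>)) \<noteq> fl)
             (\<lambda>((((y,(b0,b1)),\<alpha>),\<beta>),d). ((b0 \<noteq> (y \<and> (b0 \<noteq> b1))) \<noteq> d) \<noteq> (\<alpha> \<and> y)))))"

lemma mux_form: "EV P (mux fl) (a0,a1) (y,(b0,b1)) \<phi> =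
  (\<Sum>\<alpha>\<in>UNIV. \<Sum>\<beta>\<in>UNIV. \<Sum>c\<in>UNIV. \<Sum>d\<in>UNIV. P c d ((a0 \<noteq> a1) \<noteq> \<alpha>) (y \<noteq> \<beta>) *
     \<phi> ((((a0 \<noteq> c) \<noteq> ((a0 \<noteq> a1) \<and> \<beta>)) \<noteq> (\<alpha> \<and> \<beta>)) \<noteq> fl) (((b0 \<noteq> (y \<and> (b0 \<noteq> b1))) \<noteq> d) \<noteq> (\<alpha> \<and> y))) / 4"
  unfolding mux_def by (simp only: EV_bind EV_premap EV_rand EV_box EV_ret split fst_conv snd_conv sumB) (simp only: add_divide_distrib)

lemma sg_xor: "sg (a \<noteq> b) = sg a * sg b"
  by (simp add: sg_def)

lemma EV_mux:
  assumes P: "nonlocal_box P"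
  shows "EV P (mux fl) (a0,a1) (y,(b0,b1)) (\<lambda>u v. sg ((u \<noteq> v) \<noteq> t)) =
    sg fl * sg ((if y then a1 \<noteq> b1 else a0 \<noteq> b0) \<noteq> t) * etab P"
proof -
  have inner: "(\<Sum>c\<in>UNIV. \<Sum>d\<in>UNIV. P c d ((a0 \<noteq> a1) \<noteq> \<alpha>) (y \<noteq> \<beta>) *
     sg ((((((a0 \<noteq> c) \<noteq> ((a0 \<noteq> a1) \<and> \<beta>)) \<noteq> (\<alpha> \<and> \<beta>)) \<noteq> fl) \<noteq> (((b0 \<noteq> (y \<and> (b0 \<noteq> b1))) \<noteq> d) \<noteq> (\<alpha> \<and> y))) \<noteq> t))
     = 1 * (sg ((((((a0 \<noteq> ((a0 \<noteq> a1) \<and> \<beta>)) \<noteq> (\<alpha> \<and> \<beta>)) \<noteq> fl) \<noteq> ((b0 \<noteq> (y \<and> (b0 \<noteq> b1))) \<noteq> (\<alpha> \<and> y))) \<noteq> t)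
           \<noteq> (((a0 \<noteq> a1) \<noteq> \<alpha>) \<and> (y \<noteq> \<beta>))) * eta P ((a0 \<noteq> a1) \<noteq> \<alpha>) (y \<noteq> \<beta>))" for \<alpha> \<beta>
    by (rule box_lemma[OF P]) (simp only: mult_1_left, rule arg_cong[where f=sg], argo)
  have c: "sg ((((((a0 \<noteq> ((a0 \<noteq> a1) \<and> \<beta>)) \<noteq> (\<alpha> \<and> \<beta>)) \<noteq> fl) \<noteq> ((b0 \<noteq> (y \<and> (b0 \<noteq> b1))) \<noteq> (\<alpha> \<and> y))) \<noteq> t)
           \<noteq> (((a0 \<noteq> a1) \<noteq> \<alpha>) \<and> (y \<noteq> \<beta>))) = sg fl * sg ((if y then a1 \<noteq> b1 else a0 \<noteq> b0) \<noteq> t)" for \<alpha> \<beta>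
    unfolding sg_xor[symmetric] by (cases y; simp only: if_True if_False; rule arg_cong[where f=sg]; argo)
  have e: "(\<Sum>\<alpha>\<in>UNIV. \<Sum>\<beta>\<in>UNIV. eta P (x \<noteq> \<alpha>) (z \<noteq> \<beta>)) = 4 * etab P" for x z :: bool
    unfolding etab_def by (cases x; cases z; simp add: sumB)
  show ?thesis
    unfolding mux_form inner c mult_1_left
    by (simp only: sum_distrib_left[symmetric] e)
qed


lemma sg_cong_k: "(A \<longleftrightarrow> B) \<Longrightarrow> 1 * (sg A * k) = k * sg B"
  by simp

definition majg :: "(bool \<times> bool \<times> bool, bool \<times> bool \<times> bool, bool, bool) prot" where
  "majg = pbind prand (pbind (premap fst fst prand)
    (pbind (pbox (\<lambda>(((a1,a2,a3),\<rho>1),\<rho>2). (a1 \<noteq> a2) \<noteq> \<rho>1) (\<lambda>(((b1,b2,b3),\<rho>1),\<rho>2). (b1 \<noteq> b3) \<noteq> \<rho>2))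
     (pbind (premap fst fst (pbox (\<lambda>(((a1,a2,a3),\<rho>1),\<rho>2). (a1 \<noteq> a3) \<noteq> \<rho>2) (\<lambda>(((b1,b2,b3),\<rho>1),\<rho>2). (b1 \<noteq> b2) \<noteq> \<rho>1)))
       (pret (\<lambda>(((((a1,a2,a3),\<rho>1),\<rho>2),c1),c2). ((a1 \<noteq> (((a1 \<noteq> a2) \<noteq> \<rho>1) \<and> ((a1 \<noteq> a3) \<noteq> \<rho>2))) \<noteq> c1) \<noteq> c2)
             (\<lambda>(((((b1,b2,b3),\<rho>1),\<rho>2),d1),d2). ((b1 \<noteq> (((b1 \<noteq> b2) \<noteq> \<rho>1) \<and> ((b1 \<noteq> b3) \<noteq> \<rho>2))) \<noteq> d1) \<noteq> d2)))))"

lemma majg_form: "EV P majg (a1,a2,a3) (b1,b2,b3) \<phi> =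
  (\<Sum>\<rho>1\<in>UNIV. \<Sum>\<rho>2\<in>UNIV. \<Sum>c1\<in>UNIV. \<Sum>d1\<in>UNIV. P c1 d1 ((a1 \<noteq> a2) \<noteq> \<rho>1) ((b1 \<noteq> b3) \<noteq> \<rho>2) *
     (\<Sum>c2\<in>UNIV. \<Sum>d2\<in>UNIV. P c2 d2 ((a1 \<noteq> a3) \<noteq> \<rho>2) ((b1 \<noteq> b2) \<noteq> \<rho>1) *
       \<phi> (((a1 \<noteq> (((a1 \<noteq> a2) \<noteq> \<rho>1) \<and> ((a1 \<noteq> a3) \<noteq> \<rho>2))) \<noteq> c1) \<noteq> c2)
         (((b1 \<noteq> (((b1 \<noteq> b2) \<noteq> \<rho>1) \<and> ((b1 \<noteq> b3) \<noteq> \<rho>2))) \<noteq> d1) \<noteq> d2))) / 4"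
  unfolding majg_def by (simp only: EV_bind EV_premap EV_rand EV_box EV_ret split fst_conv snd_conv sumB) (simp only: add_divide_distrib)

definition maj3 :: "bool \<Rightarrow> bool \<Rightarrow> bool \<Rightarrow> bool" where
  "maj3 x y z = ((x \<and> y) \<or> (x \<and> z) \<or> (y \<and> z))"

definition KK :: "box \<Rightarrow> bool \<Rightarrow> bool \<Rightarrow> real" where
  "KK P u v = (\<Sum>p\<in>UNIV. \<Sum>p'\<in>UNIV. eta P p (p' \<noteq> v) * eta P p' (p \<noteq> u)) / 4"

lemma EV_majg:
  assumes P: "nonlocal_box P"
  shows "EV P majg (a1,a2,a3) (b1,b2,b3) (\<lambda>u v. sg ((u \<noteq> v) \<noteq> t)) =
    sg (maj3 (a1 \<noteq> b1) (a2 \<noteq> b2) (a3 \<noteq> b3) \<noteq> t) * KK P ((a1 \<noteq> b1) \<noteq> (a2 \<noteq> b2)) ((a1 \<noteq> b1) \<noteq> (a3 \<noteq> b3))"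
proof -
  have inner: "(\<Sum>c2\<in>UNIV. \<Sum>d2\<in>UNIV. P c2 d2 pp' qq *
       sg (((((a1 \<noteq> (pp \<and> pp')) \<noteq> c1) \<noteq> c2) \<noteq> (((b1 \<noteq> (qq \<and> qq')) \<noteq> d1) \<noteq> d2)) \<noteq> t))
     = 1 * (sg (((((a1 \<noteq> (pp \<and> pp')) \<noteq> c1) \<noteq> ((b1 \<noteq> (qq \<and> qq')) \<noteq> d1)) \<noteq> t) \<noteq> (pp' \<and> qq))
         * eta P pp' qq)" for pp qq pp' qq' c1 d1
    by (rule box_lemma[OF P]) (simp only: mult_1_left, rule arg_cong[where f=sg], argo)
  have outer: "(\<Sum>c1\<in>UNIV. \<Sum>d1\<in>UNIV. P c1 d1 pp qq' *
      (1 * (sg (((((a1 \<noteq> (pp \<and> pp')) \<noteq> c1) \<noteq> ((b1 \<noteq> (qq \<and> qq')) \<noteq> d1)) \<noteq> t) \<noteq> (pp' \<and> qq))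
         * eta P pp' qq)))
     = eta P pp' qq * (sg (((((a1 \<noteq> (pp \<and> pp')) \<noteq> (b1 \<noteq> (qq \<and> qq'))) \<noteq> t) \<noteq> (pp' \<and> qq)) \<noteq> (pp \<and> qq'))
         * eta P pp qq')" for pp qq pp' qq'
    by (rule box_lemma[OF P], rule sg_cong_k, argo)
  have "EV P majg (a1,a2,a3) (b1,b2,b3) (\<lambda>u v. sg ((u \<noteq> v) \<noteq> t)) =
    (\<Sum>\<rho>1\<in>UNIV. \<Sum>\<rho>2\<in>UNIV. eta P ((a1 \<noteq> a3) \<noteq> \<rho>2) ((b1 \<noteq> b2) \<noteq> \<rho>1) *
       (sg (((((a1 \<noteq> (((a1 \<noteq> a2) \<noteq> \<rho>1) \<and> ((a1 \<noteq> a3) \<noteq> \<rho>2))) \<noteq> (b1 \<noteq> (((b1 \<noteq> b2) \<noteq> \<rho>1) \<and> ((b1 \<noteq> b3) \<noteq> \<rho>2)))) \<noteq> t)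
          \<noteq> (((a1 \<noteq> a3) \<noteq> \<rho>2) \<and> ((b1 \<noteq> b2) \<noteq> \<rho>1))) \<noteq> (((a1 \<noteq> a2) \<noteq> \<rho>1) \<and> ((b1 \<noteq> b3) \<noteq> \<rho>2)))
         * eta P ((a1 \<noteq> a2) \<noteq> \<rho>1) ((b1 \<noteq> b3) \<noteq> \<rho>2))) / 4"
    unfolding majg_form inner outer ..
  also have "\<dots> = sg (maj3 (a1 \<noteq> b1) (a2 \<noteq> b2) (a3 \<noteq> b3) \<noteq> t) *
     ((\<Sum>\<rho>1\<in>UNIV. \<Sum>\<rho>2\<in>UNIV. eta P ((a1 \<noteq> a3) \<noteq> \<rho>2) ((b1 \<noteq> b2) \<noteq> \<rho>1) * eta P ((a1 \<noteq> a2) \<noteq> \<rho>1) ((b1 \<noteq> b3) \<noteq> \<rho>2)) / 4)"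
  proof -
    have "sg (((((a1 \<noteq> (((a1 \<noteq> a2) \<noteq> \<rho>1) \<and> ((a1 \<noteq> a3) \<noteq> \<rho>2))) \<noteq> (b1 \<noteq> (((b1 \<noteq> b2) \<noteq> \<rho>1) \<and> ((b1 \<noteq> b3) \<noteq> \<rho>2)))) \<noteq> t)
          \<noteq> (((a1 \<noteq> a3) \<noteq> \<rho>2) \<and> ((b1 \<noteq> b2) \<noteq> \<rho>1))) \<noteq> (((a1 \<noteq> a2) \<noteq> \<rho>1) \<and> ((b1 \<noteq> b3) \<noteq> \<rho>2)))
        = sg (maj3 (a1 \<noteq> b1) (a2 \<noteq> b2) (a3 \<noteq> b3) \<noteq> t)" for \<rho>1 \<rho>2
      unfolding maj3_def by (rule arg_cong[where f=sg]) auto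
    then show ?thesis by (simp add: sum_distrib_left sum_divide_distrib algebra_simps)
  qed
  also have "(\<Sum>\<rho>1\<in>UNIV. \<Sum>\<rho>2\<in>UNIV. eta P ((a1 \<noteq> a3) \<noteq> \<rho>2) ((b1 \<noteq> b2) \<noteq> \<rho>1) * eta P ((a1 \<noteq> a2) \<noteq> \<rho>1) ((b1 \<noteq> b3) \<noteq> \<rho>2)) / 4
     = KK P ((a1 \<noteq> b1) \<noteq> (a2 \<noteq> b2)) ((a1 \<noteq> b1) \<noteq> (a3 \<noteq> b3))"
  proof -
    have gen: "(\<Sum>\<rho>1\<in>UNIV. \<Sum>\<rho>2\<in>UNIV. eta P (x' \<noteq> \<rho>2) (y \<noteq> \<rho>1) * eta P (x \<noteq> \<rho>1) (y' \<noteq> \<rho>2)) / 4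
       = KK P (x \<noteq> y) (x' \<noteq> y')" for x y x' y' :: bool
      unfolding KK_def by (cases x; cases y; cases x'; cases y'; simp add: sumB algebra_simps)
    have e1: "(a1 \<noteq> b1) \<noteq> (a2 \<noteq> b2) \<longleftrightarrow> (a1 \<noteq> a2) \<noteq> (b1 \<noteq> b2)" by auto
    have e2: "(a1 \<noteq> b1) \<noteq> (a3 \<noteq> b3) \<longleftrightarrow> (a1 \<noteq> a3) \<noteq> (b1 \<noteq> b3)" by auto
    show ?thesis unfolding e1 e2 by (rule gen)
  qed
  finally show ?thesis .
qed

lemma normp_mux: "nonlocal_box P \<Longrightarrow> normp P (mux fl)"
  unfolding mux_def by (intro normp_bind normp_premap normp_box normp_rand normp_ret)

lemma normp_majg: "nonlocal_box P \<Longrightarrow> normp P majg"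
  unfolding majg_def by (intro normp_bind normp_premap normp_box normp_rand normp_ret)

definition hvg :: "(bool, bool, bool, bool) prot" where
  "hvg = pbind prand (pbind (premap fst fst prand) (pret (\<lambda>((a,r1),r2). a \<noteq> (r1 \<and> r2)) (\<lambda>((b,r1),r2). b)))"

lemma normp_hvg: "normp P hvg"
  unfolding hvg_def by (intro normp_bind normp_premap normp_rand normp_ret)

lemma EV_hvg: "EV P hvg a b (\<lambda>u v. sg ((u \<noteq> v) \<noteq> t)) = sg ((a \<noteq> b) \<noteq> t) / 2"
  unfolding hvg_def by (cases a; cases b; cases t; simp add: EV_bind sg_def)

definition pr :: "real \<Rightarrow> bool \<Rightarrow> real" where
  "pr \<beta> e = (if e then (1 - \<beta>) / 2 else (1 + \<beta>) / 2)"

lemma noisy: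
  assumes "normp P M" "EV P M X Y (\<lambda>a b. sg ((a \<noteq> b) \<noteq> t)) = \<beta>"
  shows "EV P M X Y (\<lambda>a b. w ((a \<noteq> b) \<noteq> t)) = (\<Sum>e\<in>UNIV. pr \<beta> e * w e)"
proof -
  have eq: "(\<lambda>a b. w ((a \<noteq> b) \<noteq> t)) = (\<lambda>a b. (w False + w True) / 2 + ((w False - w True) / 2) * sg ((a \<noteq> b) \<noteq> t))"
    unfolding fun_eq_iff sg_def by (auto simp: field_simps)
  have "EV P M X Y (\<lambda>a b. w ((a \<noteq> b) \<noteq> t)) = EV P M X Y (\<lambda>a b. (w False + w True) / 2 + ((w False - w True) / 2) * sg ((a \<noteq> b) \<noteq> t))"
    by (rule arg_cong[where f="EV P M X Y"]) (rule eq)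
  also have "\<dots> = (w False + w True) / 2 * 1 + ((w False - w True) / 2) * \<beta>"
    unfolding EV_lin using assms unfolding normp_def by simp
  finally have "EV P M X Y (\<lambda>a b. w ((a \<noteq> b) \<noteq> t)) = (w False + w True) / 2 * 1 + ((w False - w True) / 2) * \<beta>" .
  then show ?thesis by (simp add: sumB pr_def field_simps)
qed

definition HH :: "box \<Rightarrow> bool \<Rightarrow> bool \<Rightarrow> bool \<Rightarrow> real" where
  "HH P e1 e2 e3 = sg (maj3 e1 e2 e3) * KK P (e1 \<noteq> e2) (e1 \<noteq> e3)"

definition gfun :: "box \<Rightarrow> real \<Rightarrow> real" where
  "gfun P \<beta> = (\<Sum>e1\<in>UNIV. pr \<beta> e1 * (\<Sum>e2\<in>UNIV. pr \<beta> e2 * (\<Sum>e3\<in>UNIV. pr \<beta> e3 * HH P e1 e2 e3)))"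

definition tri :: "('x,'y,bool,bool) prot \<Rightarrow> ('x,'y,bool \<times> bool \<times> bool,bool \<times> bool \<times> bool) prot" where
  "tri M = pbind M (pbind (premap fst fst M) (pbind (premap (\<lambda>((X,a1),a2). X) (\<lambda>((Y,b1),b2). Y) M)
     (pret (\<lambda>(((X,a1),a2),a3). (a1,a2,a3)) (\<lambda>(((Y,b1),b2),b3). (b1,b2,b3)))))"

definition majlevel :: "('x,'y,bool,bool) prot \<Rightarrow> ('x,'y,bool,bool) prot" where
  "majlevel M = pbind (tri M) (premap snd snd majg)"

lemma normp_majlevel: "nonlocal_box P \<Longrightarrow> normp P M \<Longrightarrow> normp P (majlevel M)"
  unfolding majlevel_def tri_def by (intro normp_bind normp_premap normp_majg normp_ret)

lemma EV_majlevel: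
  assumes P: "nonlocal_box P" and M: "normp P M" and b: "EV P M X Y (\<lambda>a b. sg ((a \<noteq> b) \<noteq> t)) = \<beta>"
  shows "EV P (majlevel M) X Y (\<lambda>a b. sg ((a \<noteq> b) \<noteq> t)) = gfun P \<beta>"
proof -
  have pt: "sg (maj3 (a1 \<noteq> b1) (a2 \<noteq> b2) (a3 \<noteq> b3) \<noteq> t) * KK P ((a1 \<noteq> b1) \<noteq> (a2 \<noteq> b2)) ((a1 \<noteq> b1) \<noteq> (a3 \<noteq> b3))
     = HH P ((a1 \<noteq> b1) \<noteq> t) ((a2 \<noteq> b2) \<noteq> t) ((a3 \<noteq> b3) \<noteq> t)" for a1 a2 a3 b1 b2 b3
  proof -
    have m: "maj3 ((a1 \<noteq> b1) \<noteq> t) ((a2 \<noteq> b2) \<noteq> t) ((a3 \<noteq> b3) \<noteq> t) = (maj3 (a1 \<noteq> b1) (a2 \<noteq> b2) (a3 \<noteq> b3) \<noteq> t)"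
      unfolding maj3_def by argo
    have k1: "(((a1 \<noteq> b1) \<noteq> t) \<noteq> ((a2 \<noteq> b2) \<noteq> t)) = ((a1 \<noteq> b1) \<noteq> (a2 \<noteq> b2))" by argo
    have k2: "(((a1 \<noteq> b1) \<noteq> t) \<noteq> ((a3 \<noteq> b3) \<noteq> t)) = ((a1 \<noteq> b1) \<noteq> (a3 \<noteq> b3))" by argo
    show ?thesis unfolding HH_def m k1 k2 ..
  qed
  have "EV P (majlevel M) X Y (\<lambda>a b. sg ((a \<noteq> b) \<noteq> t)) =
     EV P M X Y (\<lambda>a1 b1. EV P M X Y (\<lambda>a2 b2. EV P M X Y (\<lambda>a3 b3.
        HH P ((a1 \<noteq> b1) \<noteq> t) ((a2 \<noteq> b2) \<noteq> t) ((a3 \<noteq> b3) \<noteq> t))))"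
    unfolding majlevel_def tri_def by (simp only: EV_bind EV_premap EV_ret split fst_conv snd_conv EV_majg[OF P] pt)
  also have "\<dots> = gfun P \<beta>"
  proof -
    have s3: "EV P M X Y (\<lambda>a3 b3. HH P e1 e2 ((a3 \<noteq> b3) \<noteq> t)) = (\<Sum>e3\<in>UNIV. pr \<beta> e3 * HH P e1 e2 e3)" for e1 e2
      by (rule noisy[OF M b])
    have s2: "EV P M X Y (\<lambda>a2 b2. \<Sum>e3\<in>UNIV. pr \<beta> e3 * HH P e1 ((a2 \<noteq> b2) \<noteq> t) e3) =
       (\<Sum>e2\<in>UNIV. pr \<beta> e2 * (\<Sum>e3\<in>UNIV. pr \<beta> e3 * HH P e1 e2 e3))" for e1
      using noisy[OF M b, where w="\<lambda>e2. \<Sum>e3\<in>UNIV. pr \<beta> e3 * HH P e1 e2 e3"] by simp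
    have s1: "EV P M X Y (\<lambda>a1 b1. \<Sum>e2\<in>UNIV. pr \<beta> e2 * (\<Sum>e3\<in>UNIV. pr \<beta> e3 * HH P ((a1 \<noteq> b1) \<noteq> t) e2 e3)) =
       gfun P \<beta>"
      unfolding gfun_def
      using noisy[OF M b, where w="\<lambda>e1. \<Sum>e2\<in>UNIV. pr \<beta> e2 * (\<Sum>e3\<in>UNIV. pr \<beta> e3 * HH P e1 e2 e3)"] by simp
    show ?thesis unfolding s3 s2 s1 ..
  qed
  finally show ?thesis .
qed

definition Bq :: "box \<Rightarrow> real" where
  "Bq P = 2 * (eta P False False)^2 + 4 * eta P False True * eta P True False + 2 * (eta P True True)^2"
definition Aq :: "box \<Rightarrow> real" where
  "Aq P = (eta P False False + eta P False True + eta P True False + eta P True True)^2"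
definition Mq :: "box \<Rightarrow> real" where
  "Mq P = ((eta P False True)^2 + (eta P True False)^2 + 2 * eta P False False * eta P True True) / 4
        + (eta P False False + eta P True True) * (eta P False True + eta P True False) / 2"

lemma gfun_poly: "gfun P \<beta> = \<beta> * ((Aq P + Bq P) / 16 + (Bq P / 32 - Mq P / 4) * \<beta>^2)"
  unfolding gfun_def HH_def KK_def maj3_def pr_def Aq_def Bq_def Mq_def
  by (simp add: sumB sg_def power2_eq_square field_simps)



lemma EV_constn: "normp P p \<Longrightarrow> EV P p X Y (\<lambda>u v. c) = c"
  using EV_const[of P p X Y c] unfolding normp_def by simp

definition muxlevel :: "bool \<Rightarrow> (bool list \<Rightarrow> bool, bool list, bool, bool) prot \<Rightarrow> (bool list \<Rightarrow> bool, bool list, bool, bool) prot" where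
  "muxlevel fl C = pbind (premap (\<lambda>g l. g (False # l)) tl C)
    (pbind (premap (\<lambda>(g,a0) l. g (True # l)) (\<lambda>(Y,b0). tl Y) C)
      (premap (\<lambda>((g,a0),a1). (a0,a1)) (\<lambda>((Y,b0),b1). (hd Y,(b0,b1))) (mux fl)))"

lemma normp_muxlevel: "nonlocal_box P \<Longrightarrow> normp P C \<Longrightarrow> normp P (muxlevel fl C)"
  unfolding muxlevel_def by (intro normp_bind normp_premap normp_mux)

lemma EV_muxlevel:
  assumes P: "nonlocal_box P" and C: "normp P C"
    and sp: "\<And>g (Y::bool list). length Y = m \<Longrightarrow> EV P C g Y (\<lambda>(a::bool) b. sg ((a \<noteq> b) \<noteq> g Y)) = c"
    and len: "length Y = Suc m"
  shows "EV P (muxlevel fl C) g Y (\<lambda>a b. sg ((a \<noteq> b) \<noteq> g Y)) = sg fl * etab P * c"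
proof -
  obtain y0 Y' where Y: "Y = y0 # Y'" and l: "length Y' = m" using len by (cases Y) auto
  define g0 where "g0 = (\<lambda>l. g (False # l))"
  define g1 where "g1 = (\<lambda>l. g (True # l))"
  have "EV P (muxlevel fl C) g Y (\<lambda>a b. sg ((a \<noteq> b) \<noteq> g Y)) =
    EV P C g0 Y' (\<lambda>a0 b0. EV P C g1 Y' (\<lambda>a1 b1. EV P (mux fl) (a0,a1) (y0,(b0,b1)) (\<lambda>u v. sg ((u \<noteq> v) \<noteq> g Y))))"
    unfolding muxlevel_def g0_def g1_def Y by (simp only: EV_bind EV_premap split list.sel)
  also have "\<dots> = EV P C g0 Y' (\<lambda>a0 b0. EV P C g1 Y' (\<lambda>a1 b1. sg fl * sg ((if y0 then a1 \<noteq> b1 else a0 \<noteq> b0) \<noteq> g Y) * etab P))"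
    by (simp only: EV_mux[OF P])
  also have "\<dots> = sg fl * etab P * c"
  proof (cases y0)
    case True
    have gy: "g Y = g1 Y'" using True by (simp add: Y g1_def)
    have i: "EV P C g1 Y' (\<lambda>a1 b1. sg fl * sg ((if y0 then a1 \<noteq> b1 else a0 \<noteq> b0) \<noteq> g Y) * etab P) = sg fl * etab P * c" for a0 b0
    proof -
      have "(\<lambda>a1 b1. sg fl * sg ((if y0 then a1 \<noteq> b1 else a0 \<noteq> b0) \<noteq> g Y) * etab P) = (\<lambda>a1 b1. (sg fl * etab P) * sg ((a1 \<noteq> b1) \<noteq> g1 Y'))"
        using True gy by (simp add: fun_eq_iff)
      note eqf = this
      show ?thesis unfolding eqf EV_cmult sp[OF l] ..
    qed
    show ?thesis unfolding i EV_constn[OF C] ..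
  next
    case False
    have gy: "g Y = g0 Y'" using False by (simp add: Y g0_def)
    have i: "EV P C g1 Y' (\<lambda>a1 b1. sg fl * sg ((if y0 then a1 \<noteq> b1 else a0 \<noteq> b0) \<noteq> g Y) * etab P) = sg fl * etab P * sg ((a0 \<noteq> b0) \<noteq> g0 Y')" for a0 b0
    proof -
      have "(\<lambda>a1 b1. sg fl * sg ((if y0 then a1 \<noteq> b1 else a0 \<noteq> b0) \<noteq> g Y) * etab P) = (\<lambda>a1 b1. sg fl * etab P * sg ((a0 \<noteq> b0) \<noteq> g0 Y'))"
        using False gy by (simp add: fun_eq_iff)
      note eqf = this
      show ?thesis unfolding eqf EV_constn[OF C] ..
    qed
    show ?thesis unfolding i by (simp only: EV_cmult sp[OF l])
  qed
  finally show ?thesis .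
qed

definition halve :: "('x,'y,bool,bool) prot \<Rightarrow> ('x,'y,bool,bool) prot" where
  "halve C = pbind C (premap snd snd hvg)"

lemma normp_halve: "normp P C \<Longrightarrow> normp P (halve C)"
  unfolding halve_def by (intro normp_bind normp_premap normp_hvg)

lemma EV_halve: "EV P (halve C) X Y (\<lambda>a b. sg ((a \<noteq> b) \<noteq> t)) = EV P C X Y (\<lambda>a b. sg ((a \<noteq> b) \<noteq> t)) / 2"
  unfolding halve_def by (simp only: EV_bind EV_premap snd_conv EV_hvg) (simp add: EV_cmult[where c="1/2", simplified])

definition leaf :: "(bool list \<Rightarrow> bool, bool list, bool, bool) prot" where
  "leaf = pret (\<lambda>g. g []) (\<lambda>Y. False)"

lemma base_level: "normp P ((halve ^^ s) leaf) \<and>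
   (\<forall>g Y. length Y = 0 \<longrightarrow> EV P ((halve ^^ s) leaf) g Y (\<lambda>a b. sg ((a \<noteq> b) \<noteq> g Y)) = (1/2)^s)"
proof (induction s)
  case 0
  show ?case by (simp add: leaf_def normp_ret sg_def)
next
  case (Suc s)
  have e: "EV P ((halve ^^ Suc s) leaf) g Y (\<lambda>a b. sg ((a \<noteq> b) \<noteq> g Y)) = EV P ((halve ^^ s) leaf) g Y (\<lambda>a b. sg ((a \<noteq> b) \<noteq> g Y)) / 2" for g Y
    by (simp only: funpow.simps comp_apply EV_halve)
  show ?case using Suc.IH by (simp only: e) (simp add: normp_halve)
qed

lemma majiter: "nonlocal_box P \<Longrightarrow> normp P M \<Longrightarrow> (\<forall>X Y. Q X Y \<longrightarrow> EV P M X Y (\<lambda>a b. sg ((a \<noteq> b) \<noteq> T X Y)) = \<beta>) \<Longrightarrow>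
  normp P ((majlevel ^^ j) M) \<and> (\<forall>X Y. Q X Y \<longrightarrow> EV P ((majlevel ^^ j) M) X Y (\<lambda>a b. sg ((a \<noteq> b) \<noteq> T X Y)) = (gfun P ^^ j) \<beta>)"
proof (induction j)
  case 0
  then show ?case by simp
next
  case (Suc j)
  then have IH: "normp P ((majlevel ^^ j) M)" "\<And>X Y. Q X Y \<Longrightarrow> EV P ((majlevel ^^ j) M) X Y (\<lambda>a b. sg ((a \<noteq> b) \<noteq> T X Y)) = (gfun P ^^ j) \<beta>"
    by auto
  have n: "normp P ((majlevel ^^ Suc j) M)" using normp_majlevel[OF Suc.prems(1) IH(1)] by simp
  have "EV P ((majlevel ^^ Suc j) M) X Y (\<lambda>a b. sg ((a \<noteq> b) \<noteq> T X Y)) = (gfun P ^^ Suc j) \<beta>" if "Q X Y" for X Y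
    using EV_majlevel[OF Suc.prems(1) IH(1) IH(2)[OF that]] by simp
  then show ?case using n by blast
qed


lemma eta_bound: assumes P: "nonlocal_box P" shows "\<bar>eta P x y\<bar> \<le> 1"
proof -
  have nn: "\<And>a b. P a b x y \<ge> 0" using P unfolding nonlocal_box_def by blast
  have s: "P True True x y + P True False x y + (P False True x y + P False False x y) = 1"
    using nlb_sum1[OF P, of x y] by (simp add: sumB)
  show ?thesis unfolding eta_def using nn[of True True] nn[of True False] nn[of False True] nn[of False False] s
    by (cases x; cases y; simp add: sumB abs_le_iff)
qed

lemma reach:
  fixes gf :: "real \<Rightarrow> real"
  assumes lo: "\<And>v. 0 < v \<Longrightarrow> v \<le> \<epsilon> \<Longrightarrow> lp * v \<le> gf v" and hi: "\<And>v. 0 < v \<Longrightarrow> v \<le> \<epsilon> \<Longrightarrow> gf v \<le> L * v"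
    and lp: "lp > 1" and L: "L > 0" and d: "\<delta> * L \<le> \<epsilon>" and d0: "0 < \<delta>"
  shows "0 < v \<Longrightarrow> v \<le> \<epsilon> \<Longrightarrow> \<delta> \<le> lp ^ n * v \<Longrightarrow> \<exists>j. \<delta> \<le> (gf ^^ j) v \<and> (gf ^^ j) v \<le> \<epsilon>"
proof (induction n arbitrary: v)
  case 0
  then show ?case by (intro exI[of _ 0]) simp
next
  case (Suc n)
  show ?case
  proof (cases "\<delta> \<le> v")
    case True
    then show ?thesis using Suc.prems by (intro exI[of _ 0]) simp
  next
    case False
    have g1: "lp * v \<le> gf v" using lo Suc.prems by auto
    have g2: "gf v \<le> L * v" using hi Suc.prems by auto
    have "L * v \<le> L * \<delta>" using False L by simp
    then have g3: "gf v \<le> \<epsilon>" using g2 d by (simp add: mult.commute)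
    have g0: "0 < gf v" using g1 lp Suc.prems(1)
      by (smt (verit) mult_pos_pos)
    have "\<delta> \<le> lp ^ n * (lp * v)" using Suc.prems(3) by (simp add: algebra_simps)
    also have "\<dots> \<le> lp ^ n * gf v" using g1 lp by (intro mult_left_mono) auto
    finally obtain j where "\<delta> \<le> (gf ^^ j) (gf v) \<and> (gf ^^ j) (gf v) \<le> \<epsilon>"
      using Suc.IH[OF g0 g3] by blast
    then show ?thesis by (intro exI[of _ "Suc j"]) (simp add: funpow_swap1)
  qed
qed


lemma success_EV:
  "success_prob P (pR C) (pN C) (pA C) (pB C) (\<lambda>Y r bs. [pfb C Y r bs]) (\<lambda>X r as cl. pfa C X r as \<noteq> hd cl) f X Y
   = EV P C X Y (\<lambda>u v. if (u \<noteq> v) = f X Y then 1 else 0)"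
  unfolding success_prob_def EV_def by simp

theorem theorem1:
  fixes P :: box
  assumes "nonlocal_box P"
    and "(eta P False False + eta P False True + eta P True False + eta P True True)^2
         + (2 * (eta P False False)^2 + 4 * eta P False True * eta P True False
            + 2 * (eta P True True)^2) > 16"
  shows "\<exists>p > 1/2. \<forall>n m (f :: bool list \<Rightarrow> bool list \<Rightarrow> bool).
           n \<ge> 1 \<longrightarrow> m \<ge> 1 \<longrightarrow> CC_le_1 P p f n m"
proof -
  note P = assms(1)
  have AB: "Aq P + Bq P > 16" using assms(2) unfolding Aq_def Bq_def by simp
  define e00 where "e00 = eta P False False"
  define e01 where "e01 = eta P False True"
  define e10 where "e10 = eta P True False"
  define e11 where "e11 = eta P True True"
  have b00: "\<bar>e00\<bar> \<le> 1" and b01: "\<bar>e01\<bar> \<le> 1" and b10: "\<bar>e10\<bar> \<le> 1" and b11: "\<bar>e11\<bar> \<le> 1"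
    unfolding e00_def e01_def e10_def e11_def using eta_bound[OF P] by auto
  have Bq8: "Bq P \<le> 8"
  proof -
    have "e00^2 \<le> 1" using b00 by (simp add: abs_square_le_1)
    moreover have "e11^2 \<le> 1" using b11 by (simp add: abs_square_le_1)
    moreover have "e01 * e10 \<le> 1"
    proof -
      have "\<bar>e01 * e10\<bar> \<le> 1" using b01 b10 by (simp add: abs_mult mult_le_one)
      then show ?thesis by simp
    qed
    ultimately show ?thesis unfolding Bq_def e00_def[symmetric] e01_def[symmetric] e10_def[symmetric] e11_def[symmetric] by linarith
  qed
  have Aq_eq: "Aq P = 16 * (etab P)^2" unfolding Aq_def etab_def by (simp add: power2_eq_square field_simps)
  have et0: "etab P \<noteq> 0" using AB Bq8 Aq_eq by auto
  have et1: "\<bar>etab P\<bar> \<le> 1" unfolding etab_def e00_def[symmetric] e01_def[symmetric] e10_def[symmetric] e11_def[symmetric]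
    using b00 b01 b10 b11 by (simp add: abs_le_iff)
  define h where "h = \<bar>etab P\<bar>"
  have h0: "0 < h" and h1: "h \<le> 1" using et0 et1 by (auto simp: h_def)
  define lam where "lam = (Aq P + Bq P) / 16"
  define mu where "mu = Bq P / 32 - Mq P / 4"
  have lam1: "lam > 1" using AB by (simp add: lam_def)
  have gpoly: "gfun P v = v * (lam + mu * v^2)" for v unfolding gfun_poly lam_def mu_def ..
  define lp where "lp = (1 + lam) / 2"
  define L where "L = lam + \<bar>mu\<bar>"
  have lp1: "lp > 1" using lam1 by (simp add: lp_def)
  have L0: "L > 0" using lam1 by (simp add: L_def)
  obtain s where s: "(1/2::real)^s < (lam - 1) / (2 * (\<bar>mu\<bar> + 1))"
    using real_arch_pow_inv[of "(lam - 1) / (2 * (\<bar>mu\<bar> + 1))" "1/2::real"] lam1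
    by (auto simp: divide_pos_pos)
  define \<epsilon> where "\<epsilon> = (1/2::real)^s"
  have e0: "0 < \<epsilon>" and e1: "\<epsilon> \<le> 1" by (auto simp: \<epsilon>_def power_le_one)
  define \<delta> where "\<delta> = \<epsilon> / (L + 1)"
  have d0: "0 < \<delta>" using e0 L0 by (simp add: \<delta>_def)
  have dL: "\<delta> * L \<le> \<epsilon>" using e0 L0 by (simp add: \<delta>_def field_simps)
  have de: "\<delta> \<le> \<epsilon>" using e0 L0 by (simp add: \<delta>_def field_simps)
  have lo: "lp * v \<le> gfun P v" if "0 < v" "v \<le> \<epsilon>" for v
  proof -
    have "v * v \<le> \<epsilon> * 1" by (rule mult_mono) (use that e1 in auto)
    then have v2: "v^2 \<le> \<epsilon>" by (simp add: power2_eq_square)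
    then have "\<bar>mu\<bar> * v^2 \<le> \<bar>mu\<bar> * \<epsilon>" by (simp add: mult_left_mono)
    also have "\<dots> \<le> (lam - 1) / 2"
    proof -
      have a: "\<epsilon> * (2 * (\<bar>mu\<bar> + 1)) \<le> lam - 1" using s by (simp add: \<epsilon>_def field_simps)
      have b: "\<bar>mu\<bar> * \<epsilon> \<le> (\<bar>mu\<bar> + 1) * \<epsilon>" using e0 by simp
      show ?thesis using a b by (simp add: algebra_simps)
    qed
    finally have m1: "\<bar>mu\<bar> * v^2 \<le> (lam - 1) / 2" .
    have m2: "- \<bar>mu\<bar> * v^2 \<le> mu * v^2" by (rule mult_right_mono) auto
    have "lp \<le> lam + mu * v^2" unfolding lp_def using m1 m2 by simp
    then have "v * lp \<le> v * (lam + mu * v^2)" using that by (simp add: mult_left_mono)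
    then show ?thesis unfolding gpoly by (simp add: mult.commute)
  qed
  have hi: "gfun P v \<le> L * v" if "0 < v" "v \<le> \<epsilon>" for v
  proof -
    have v2: "v^2 \<le> 1" using that e1 by (simp add: power_le_one)
    have "mu * v^2 \<le> \<bar>mu\<bar> * v^2" by (rule mult_right_mono) auto
    also have "\<dots> \<le> \<bar>mu\<bar> * 1" using v2 by (intro mult_left_mono) auto
    finally have "lam + mu * v^2 \<le> L" unfolding L_def by simp
    then have "v * (lam + mu * v^2) \<le> v * L" using that by (simp add: mult_left_mono)
    then show ?thesis unfolding gpoly by (simp add: mult.commute)
  qed
  have levels: "\<exists>C c. normp P C \<and> \<delta> \<le> c \<and> c \<le> \<epsilon> \<and>
      (\<forall>g (Y::bool list). length Y = m \<longrightarrow> EV P C g Y (\<lambda>(a::bool) b. sg ((a \<noteq> b) \<noteq> g Y)) = c)" for m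
  proof (induction m)
    case 0
    have "normp P ((halve ^^ s) leaf) \<and> (\<forall>g Y. length Y = 0 \<longrightarrow> EV P ((halve ^^ s) leaf) g Y (\<lambda>a b. sg ((a \<noteq> b) \<noteq> g Y)) = \<epsilon>)"
      using base_level[of P s] unfolding \<epsilon>_def .
    then have b1: "normp P ((halve ^^ s) leaf)"
      and b2: "\<forall>g Y. length Y = 0 \<longrightarrow> EV P ((halve ^^ s) leaf) g Y (\<lambda>a b. sg ((a \<noteq> b) \<noteq> g Y)) = \<epsilon>" by auto
    have "normp P ((halve ^^ s) leaf) \<and> \<delta> \<le> \<epsilon> \<and> \<epsilon> \<le> \<epsilon> \<and>
      (\<forall>g Y. length Y = 0 \<longrightarrow> EV P ((halve ^^ s) leaf) g Y (\<lambda>a b. sg ((a \<noteq> b) \<noteq> g Y)) = \<epsilon>)"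
      using b1 b2 de by simp
    then show ?case by (rule exI[of _ \<epsilon>, THEN exI[of _ "(halve ^^ s) leaf"]])
  next
    case (Suc m)
    then obtain C c where C: "normp P C" and c: "\<delta> \<le> c" "c \<le> \<epsilon>"
      and sp: "\<And>g (Y::bool list). length Y = m \<Longrightarrow> EV P C g Y (\<lambda>(a::bool) b. sg ((a \<noteq> b) \<noteq> g Y)) = c" by blast
    define fl where "fl = (etab P < 0)"
    define C1 where "C1 = muxlevel fl C"
    have sgf: "sg fl * etab P = h"
    proof (cases "etab P < 0")
      case True then show ?thesis unfolding fl_def h_def sg_def by simp
    next
      case False then show ?thesis unfolding fl_def h_def sg_def by simp
    qed
    have C1n: "normp P C1" unfolding C1_def by (rule normp_muxlevel[OF P C])
    have C1s: "\<forall>g (Y::bool list). length Y = Suc m \<longrightarrow> EV P C1 g Y (\<lambda>a b. sg ((a \<noteq> b) \<noteq> g Y)) = h * c"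
    proof (intro allI impI)
      fix g and Y :: "bool list" assume lY: "length Y = Suc m"
      show "EV P C1 g Y (\<lambda>a b. sg ((a \<noteq> b) \<noteq> g Y)) = h * c"
        using EV_muxlevel[OF P C sp lY, of fl g] sgf unfolding C1_def by simp
    qed
    have v0: "0 < h * c" using h0 c d0 by simp
    have "h * c \<le> 1 * c" by (rule mult_right_mono) (use h1 c d0 in auto)
    then have v1: "h * c \<le> \<epsilon>" using c by simp
    obtain n where n: "\<delta> / (h * c) < lp ^ n" using real_arch_pow[OF lp1] by blast
    then have "\<delta> \<le> lp ^ n * (h * c)" using v0 by (simp add: field_simps)
    then obtain j where j: "\<delta> \<le> (gfun P ^^ j) (h * c)" "(gfun P ^^ j) (h * c) \<le> \<epsilon>"
      using reach[of \<epsilon> lp "gfun P" L \<delta> "h * c" n, OF lo hi lp1 L0 dL d0 v0 v1] by blast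
    have M: "normp P ((majlevel ^^ j) C1) \<and> (\<forall>g (Y::bool list). length Y = Suc m \<longrightarrow>
        EV P ((majlevel ^^ j) C1) g Y (\<lambda>a b. sg ((a \<noteq> b) \<noteq> g Y)) = (gfun P ^^ j) (h * c))"
      using majiter[OF P C1n, of "\<lambda>g Y. length Y = Suc m" "\<lambda>g Y. g Y" "h * c" j] C1s by blast
    show ?case using M j by blast
  qed
  have "\<forall>n m (f :: bool list \<Rightarrow> bool list \<Rightarrow> bool). n \<ge> 1 \<longrightarrow> m \<ge> 1 \<longrightarrow> CC_le_1 P ((1 + \<delta>) / 2) f n m"
  proof (intro allI impI)
    fix n m :: nat and f :: "bool list \<Rightarrow> bool list \<Rightarrow> bool"
    obtain C c where C: "normp P C" and c: "\<delta> \<le> c"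
      and sp: "\<And>g (Y::bool list). length Y = m \<Longrightarrow> EV P C g Y (\<lambda>(a::bool) b. sg ((a \<noteq> b) \<noteq> g Y)) = c" using levels[of m] by blast
    define C' where "C' = premap f (\<lambda>Y. Y) C"
    have "success_prob P (pR C') (pN C') (pA C') (pB C') (\<lambda>Y r bs. [pfb C' Y r bs]) (\<lambda>X r as cl. pfa C' X r as \<noteq> hd cl) f X Y
       \<ge> (1 + \<delta>) / 2" if "length X = n" "length Y = m" for X Y
    proof -
      have eq: "(\<lambda>u v. if (u \<noteq> v) = f X Y then 1 else 0) = (\<lambda>u v. 1/2 + 1/2 * sg ((u \<noteq> v) \<noteq> f X Y))"
        by (auto simp: fun_eq_iff sg_def)
      have "success_prob P (pR C') (pN C') (pA C') (pB C') (\<lambda>Y r bs. [pfb C' Y r bs]) (\<lambda>X r as cl. pfa C' X r as \<noteq> hd cl) f X Y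
          = EV P C (f X) Y (\<lambda>u v. 1/2 + 1/2 * sg ((u \<noteq> v) \<noteq> f X Y))"
        unfolding success_EV C'_def EV_premap eq ..
      also have "\<dots> = 1/2 + 1/2 * c" unfolding EV_lin using C sp[OF that(2), of "f X"] unfolding normp_def by simp
      finally show ?thesis using c by simp
    qed
    then have "cc_protocol P ((1 + \<delta>) / 2) f n m 1"
      unfolding cc_protocol_def by (intro exI[of _ "pR C'"] exI[of _ "pN C'"] exI[of _ "pA C'"] exI[of _ "pB C'"]
           exI[of _ "\<lambda>Y r bs. [pfb C' Y r bs]"] exI[of _ "\<lambda>X r as cl. pfa C' X r as \<noteq> hd cl"]) auto
    then show "CC_le_1 P ((1 + \<delta>) / 2) f n m" unfolding CC_le_1_def by auto
  qed
  moreover have "(1 + \<delta>) / 2 > 1/2" using d0 by simp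
  ultimately show ?thesis by blast
qed

end
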